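(* Let $(X,D)$ be an $\mathcal{F}$-metric space with respect to some $(f,\alpha)\in\mathcal{F}\times[0,\infty)$. Then the topological space $(X,\tau_{\mathcal{F}})$ is metrizable, i.e. there is a metric $d$ on $X$ whose metric topology equals $\tau_{\mathcal{F}}$.
   Context: $\mathcal{F}$ denotes the class of functions $f:(0,\infty)\to\mathbb{R}$ such that ($\mathcal{F}_1$) $f$ is non-decreasing, and ($\mathcal{F}_2$) for every sequence $(t_n)\subseteq(0,\infty)$, $\lim_n t_n=0$ iff $\lim_n f(t_n)=-\infty$. An $\mathcal{F}$-metric on a non-empty set $X$ is a map $D:X\times X\to[0,\infty)$ for which there exists $(f,\alpha)\in\mathcal{F}\times[0,\infty)$ such that: (D1) $D(x,y)=0$ iff $x=y$; (D2) $D(x,y)=D(y,x)$ for all $x,y$; (D3) for all $(x,y)\in X\times X$, every integer $N\ge2$ and every $u_1,\dots,u_N\in X$ with $u_1=x$, $u_N=y$: if $D(x,y)>0$ then $f(D(x,y))\le f\big(\sum_{i=1}^{N-1}D(u_i,u_{i+1})\big)+\alpha$. The pair $(X,D)$ is an $\mathcal{F}$-metric space. The topology $\tau_{\mathcal{F}}$ consists of all $C\subseteq X$ such that for every $x\in C$ there is $r>0$ with $B(x,r)=\{y\in X: D(y,x)<r\}\subseteq C$. *)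

theory Defs
  imports "HOL-Analysis.Analysis"
begin

text \<open>The class F: functions f on (0,inf) (represented as real functions, only
  values on positive reals matter) that are non-decreasing and such that for
  every positive sequence t, t n tends to 0 iff f (t n) tends to minus infinity.\<close>
definition F_class :: "(real \<Rightarrow> real) \<Rightarrow> bool" where
  "F_class f \<longleftrightarrow>
     (\<forall>s t. 0 < s \<longrightarrow> s \<le> t \<longrightarrow> f s \<le> f t) \<and>
     (\<forall>t :: nat \<Rightarrow> real. (\<forall>n. 0 < t n) \<longrightarrow>
        (t \<longlonglongrightarrow> 0 \<longleftrightarrow> filterlim (\<lambda>n. f (t n)) at_bot sequentially))"

definition F_metric_wrt :: "'a set \<Rightarrow> ('a \<Rightarrow> 'a \<Rightarrow> real) \<Rightarrow> (real \<Rightarrow> real) \<Rightarrow> real \<Rightarrow> bool" where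
  "F_metric_wrt X D f \<alpha> \<longleftrightarrow>
     F_class f \<and> 0 \<le> \<alpha> \<and>
     (\<forall>x\<in>X. \<forall>y\<in>X. 0 \<le> D x y) \<and>
     (\<forall>x\<in>X. \<forall>y\<in>X. D x y = 0 \<longleftrightarrow> x = y) \<and>
     (\<forall>x\<in>X. \<forall>y\<in>X. D x y = D y x) \<and>
     (\<forall>x\<in>X. \<forall>y\<in>X. \<forall>N::nat. \<forall>u :: nat \<Rightarrow> 'a.
        2 \<le> N \<longrightarrow> (\<forall>i\<in>{1..N}. u i \<in> X) \<longrightarrow> u 1 = x \<longrightarrow> u N = y \<longrightarrow>
        0 < D x y \<longrightarrow> f (D x y) \<le> f (\<Sum>i=1..N-1. D (u i) (u (i+1))) + \<alpha>)"

definition F_topology :: "'a set \<Rightarrow> ('a \<Rightarrow> 'a \<Rightarrow> real) \<Rightarrow> 'a topology" where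
  "F_topology X D = topology (\<lambda>C. C \<subseteq> X \<and>
      (\<forall>x\<in>C. \<exists>r>0. {y\<in>X. D y x < r} \<subseteq> C))"

end

theory Submission
  imports Defs
begin

definition chS :: "'a set \<Rightarrow> ('a \<Rightarrow> 'a \<Rightarrow> real) \<Rightarrow> 'a \<Rightarrow> 'a \<Rightarrow> real set" where
  "chS X D x y = {(\<Sum>i=1..N-1. D (u i) (u (i+1))) | (N::nat) (u::nat \<Rightarrow> 'a). 2 \<le> N \<and> (\<forall>i\<in>{1..N}. u i \<in> X) \<and> u 1 = x \<and> u N = y}"

context
  fixes X :: "'a set" and D :: "'a \<Rightarrow> 'a \<Rightarrow> real" and f :: "real \<Rightarrow> real" and \<alpha> :: real
  assumes FM: "F_metric_wrt X D f \<alpha>"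
begin

lemma FMu: "F_class f \<and> 0 \<le> \<alpha> \<and>
     (\<forall>x\<in>X. \<forall>y\<in>X. 0 \<le> D x y) \<and>
     (\<forall>x\<in>X. \<forall>y\<in>X. D x y = 0 \<longleftrightarrow> x = y) \<and>
     (\<forall>x\<in>X. \<forall>y\<in>X. D x y = D y x) \<and>
     (\<forall>x\<in>X. \<forall>y\<in>X. \<forall>N::nat. \<forall>u :: nat \<Rightarrow> 'a.
        2 \<le> N \<longrightarrow> (\<forall>i\<in>{1..N}. u i \<in> X) \<longrightarrow> u 1 = x \<longrightarrow> u N = y \<longrightarrow>
        0 < D x y \<longrightarrow> f (D x y) \<le> f (\<Sum>i=1..N-1. D (u i) (u (i+1))) + \<alpha>)"
  using FM unfolding F_metric_wrt_def .

lemma Dnn: "x \<in> X \<Longrightarrow> y \<in> X \<Longrightarrow> 0 \<le> D x y"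
  using FMu by (elim conjE) (erule ballE, erule ballE, assumption, simp, simp)

lemma Dz: "x \<in> X \<Longrightarrow> y \<in> X \<Longrightarrow> D x y = 0 \<longleftrightarrow> x = y"
  using FMu by (elim conjE) (erule ballE, erule ballE, assumption, simp, simp)

lemma Dsym: "x \<in> X \<Longrightarrow> y \<in> X \<Longrightarrow> D x y = D y x"
  using FMu by (elim conjE) (erule ballE, erule ballE, assumption, simp, simp)

lemma D3: fixes N :: nat shows "x \<in> X \<Longrightarrow> y \<in> X \<Longrightarrow> 2 \<le> N \<Longrightarrow> (\<forall>i\<in>{1..N}. u i \<in> X) \<Longrightarrow> u 1 = x \<Longrightarrow> u N = y
   \<Longrightarrow> 0 < D x y \<Longrightarrow> f (D x y) \<le> f (\<Sum>i=1..N-1. D (u i) (u (i+1))) + \<alpha>"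
proof -
  assume a: "x \<in> X" "y \<in> X" "2 \<le> N" "\<forall>i\<in>{1..N}. u i \<in> X" "u 1 = x" "u N = y" "0 < D x y"
  have "\<forall>x\<in>X. \<forall>y\<in>X. \<forall>N::nat. \<forall>u :: nat \<Rightarrow> 'a.
        2 \<le> N \<longrightarrow> (\<forall>i\<in>{1..N}. u i \<in> X) \<longrightarrow> u 1 = x \<longrightarrow> u N = y \<longrightarrow>
        0 < D x y \<longrightarrow> f (D x y) \<le> f (\<Sum>i=1..N-1. D (u i) (u (i+1))) + \<alpha>"
    using FMu by (elim conjE)
  then show ?thesis using a by simp
qed

lemma Fc: "F_class f"
  using FMu by (elim conjE)

lemma chS_D: "x \<in> X \<Longrightarrow> y \<in> X \<Longrightarrow> D x y \<in> chS X D x y"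
  unfolding chS_def
  apply (rule CollectI)
  apply (rule exI[of _ 2], rule exI[of _ "\<lambda>i. if i = 1 then x else y"])
  by auto

lemma chS_nn: "a \<in> chS X D x y \<Longrightarrow> 0 \<le> a"
  unfolding chS_def by (auto intro!: sum_nonneg Dnn)

lemma chS_rev: assumes "a \<in> chS X D x y" shows "a \<in> chS X D y x"
proof -
  obtain N u where N: "2 \<le> (N::nat)" "\<forall>i\<in>{1..N}. u i \<in> X" "u 1 = x" "u N = y"
    and a: "a = (\<Sum>i=1..N-1. D (u i) (u (i+1)))"
    using assms unfolding chS_def by blast
  define v where "v i = u (N + 1 - i)" for i
  have "(\<Sum>i=1..N-1. D (v i) (v (i+1))) = (\<Sum>i=1..N-1. D (v (N-1+1-i)) (v (N-1+1-i+1)))"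
    by (rule sum.atLeastAtMost_rev)
  also have "\<dots> = a" unfolding a
  proof (rule sum.cong)
    fix i assume i: "i \<in> {1..N-1}"
    have e1: "v (N-1+1-i) = u (i+1)" "v (N-1+1-i+1) = u i" using i N unfolding v_def by auto
    have "u i \<in> X" "u (i+1) \<in> X" using i N by auto
    then show "D (v (N-1+1-i)) (v (N-1+1-i+1)) = D (u i) (u (i+1))"
      unfolding e1 using Dsym by auto
  qed simp
  finally have "a = (\<Sum>i=1..N-1. D (v i) (v (i+1)))" by simp
  moreover have "\<forall>i\<in>{1..N}. v i \<in> X"
  proof
    fix i assume "i \<in> {1..N}"
    then have "N+1-i \<in> {1..N}" by auto
    then show "v i \<in> X" using N unfolding v_def by blast
  qed
  moreover have "v 1 = y" "v N = x" using N unfolding v_def by auto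
  ultimately show ?thesis unfolding chS_def using N(1) by blast
qed

lemma chS_app: assumes "a \<in> chS X D x y" "b \<in> chS X D y z" shows "a + b \<in> chS X D x z"
proof -
  obtain N u where N: "2 \<le> (N::nat)" "\<forall>i\<in>{1..N}. u i \<in> X" "u 1 = x" "u N = y"
    and a: "a = (\<Sum>i=1..N-1. D (u i) (u (i+1)))"
    using assms(1) unfolding chS_def by blast
  obtain M v where M: "2 \<le> (M::nat)" "\<forall>i\<in>{1..M}. v i \<in> X" "v 1 = y" "v M = z"
    and b: "b = (\<Sum>i=1..M-1. D (v i) (v (i+1)))"
    using assms(2) unfolding chS_def by blast
  define w where "w i = (if i \<le> N then u i else v (i + 1 - N))" for i
  have wv: "w i = v (i + 1 - N)" if "N \<le> i" for i
    using that N M unfolding w_def by auto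
  have s1: "(\<Sum>i=1..N-1. D (w i) (w (i+1))) = a" unfolding a
    by (rule sum.cong) (auto simp: w_def)
  have "(\<Sum>i=(N-1)+1..(N-1)+(M-1). D (w i) (w (i+1))) = (\<Sum>i=1+(N-1)..(M-1)+(N-1). D (w i) (w (i+1)))"
    by (simp add: add.commute)
  also have "\<dots> = (\<Sum>j=1..M-1. D (w (j+(N-1))) (w (j+(N-1)+1)))"
    by (rule sum.shift_bounds_cl_nat_ivl)
  also have "\<dots> = b" unfolding b
  proof (rule sum.cong)
    fix j assume j: "j \<in> {1..M-1}"
    have "w (j+(N-1)) = v (j+(N-1)+1-N)" using j N by (intro wv) auto
    also have "j+(N-1)+1-N = j" using j N by auto
    finally have 1: "w (j+(N-1)) = v j" .
    have "w (j+(N-1)+1) = v (j+(N-1)+1+1-N)" using j N by (intro wv) auto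
    also have "j+(N-1)+1+1-N = j+1" using j N by auto
    finally have 2: "w (j+(N-1)+1) = v (j+1)" .
    show "D (w (j+(N-1))) (w (j+(N-1)+1)) = D (v j) (v (j+1))" using 1 2 by simp
  qed simp
  finally have s2: "(\<Sum>i=(N-1)+1..(N-1)+(M-1). D (w i) (w (i+1))) = b" .
  have "(\<Sum>i=1..(N-1)+(M-1). D (w i) (w (i+1))) = a + b"
    using sum.ub_add_nat[of 1 "N-1" "\<lambda>i. D (w i) (w (i+1))" "M-1"] s1 s2 N by simp
  moreover have "(N-1)+(M-1) = (N+M-1) - 1" using N M by simp
  moreover have "\<forall>i\<in>{1..N+M-1}. w i \<in> X"
  proof
    fix i assume i: "i \<in> {1..N+M-1}"
    show "w i \<in> X"
    proof (cases "i \<le> N")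
      case True then show ?thesis using i N unfolding w_def by auto
    next
      case False
      then have "i+1-N \<in> {1..M}" using i by auto
      then show ?thesis using False M wv[of i] by auto
    qed
  qed
  moreover have "w 1 = x" "w (N+M-1) = z" using N M wv[of "N+M-1"] unfolding w_def by auto
  moreover have "2 \<le> N+M-1" using N M by simp
  ultimately have P: "a + b = (\<Sum>i=1..(N+M-1)-1. D (w i) (w (i+1)))" "2 \<le> N+M-1"
     "\<forall>i\<in>{1..N+M-1}. w i \<in> X" "w 1 = x" "w (N+M-1) = z" by simp_all
  show ?thesis unfolding chS_def mem_Collect_eq
    apply (rule exI[of _ "N+M-1"], rule exI[of _ w])
    using P by blast
qed

definition rho :: "'a \<Rightarrow> 'a \<Rightarrow> real" where
  "rho x y = (if x \<in> X \<and> y \<in> X then Inf (chS X D x y) else 0)"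

lemma chS_ne: "x \<in> X \<Longrightarrow> y \<in> X \<Longrightarrow> chS X D x y \<noteq> {}"
  using chS_D by blast

lemma chS_bdd: "bdd_below (chS X D x y)"
  using chS_nn by (meson bdd_below.I)

lemma rho_le: "a \<in> chS X D x y \<Longrightarrow> x \<in> X \<Longrightarrow> y \<in> X \<Longrightarrow> rho x y \<le> a"
  unfolding rho_def using chS_bdd by (simp add: cInf_lower)

lemma rho_nn: "0 \<le> rho x y"
  unfolding rho_def using chS_ne chS_nn by (auto intro: cInf_greatest)

lemma rho_D: "x \<in> X \<Longrightarrow> y \<in> X \<Longrightarrow> rho x y \<le> D x y"
  using rho_le chS_D by blast

lemma rho_sym: "rho x y = rho y x"
proof -
  have "chS X D x y = chS X D y x" using chS_rev by blast
  then show ?thesis unfolding rho_def by auto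
qed

lemma rho_lt: assumes "x \<in> X" "y \<in> X" "rho x y < r" obtains a where "a \<in> chS X D x y" "a < r"
proof -
  have "Inf (chS X D x y) < r" using assms unfolding rho_def by simp
  then obtain a where "a \<in> chS X D x y" "a < r" using cInf_lessD[OF chS_ne[OF assms(1,2)]] by blast
  then show ?thesis using that by blast
qed

lemma rho_tri: assumes "x \<in> X" "y \<in> X" "z \<in> X" shows "rho x z \<le> rho x y + rho y z"
proof (rule ccontr)
  assume "\<not> ?thesis"
  then have h: "rho x y + rho y z < rho x z" by simp
  define e where "e = (rho x z - rho x y - rho y z) / 2"
  have e: "e > 0" using h unfolding e_def by simp
  obtain a where a: "a \<in> chS X D x y" "a < rho x y + e" using rho_lt assms e by (metis less_add_same_cancel1)
  obtain b where b: "b \<in> chS X D y z" "b < rho y z + e" using rho_lt assms e by (metis less_add_same_cancel1)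
  have "rho x z \<le> a + b" using chS_app[OF a(1) b(1)] rho_le assms by blast
  moreover have "a + b < rho x y + rho y z + 2 * e" using a(2) b(2) by simp
  moreover have "2 * e = rho x z - rho x y - rho y z" unfolding e_def by simp
  moreover have "rho x y + rho y z + 2 * e = rho x z" using calculation(3) by simp
  ultimately show False by simp
qed

lemma chS_pos: assumes "a \<in> chS X D x y" "x \<noteq> y" shows "0 < a"
proof -
  obtain N u where N: "2 \<le> (N::nat)" "\<forall>i\<in>{1..N}. u i \<in> X" "u 1 = x" "u N = y"
    and a: "a = (\<Sum>i=1..N-1. D (u i) (u (i+1)))"
    using assms(1) unfolding chS_def by blast
  have "a \<noteq> 0"
  proof
    assume "a = 0"
    then have z: "\<forall>i\<in>{1..N-1}. D (u i) (u (i+1)) = 0"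
      unfolding a using N by (subst (asm) sum_nonneg_eq_0_iff) (auto intro!: Dnn)
    have uk: "Suc k \<le> N \<longrightarrow> u (Suc k) = u 1" for k
    proof (induction k)
      case (Suc k)
      show ?case
      proof
        assume k: "Suc (Suc k) \<le> N"
        have sk: "Suc k \<in> {1..N-1}" "Suc k \<in> {1..N}" "Suc k + 1 \<in> {1..N}" using k by auto
        have "D (u (Suc k)) (u (Suc k + 1)) = 0" "u (Suc k) \<in> X" "u (Suc k+1) \<in> X"
          using z N(2) sk by auto
        then have "u (Suc k) = u (Suc (Suc k))" using Dz by simp
        then show "u (Suc (Suc k)) = u 1" using Suc k by simp
      qed
    qed simp
    have sN: "Suc (N-1) = N" using N by simp
    have "u N = u 1" using uk[of "N-1"] unfolding sN by simp
    then show False using N assms(2) by simp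
  qed
  then show ?thesis using chS_nn assms(1) by force
qed

lemma key: assumes "e > 0" shows "\<exists>d>0. \<forall>x\<in>X. \<forall>y\<in>X. rho x y < d \<longrightarrow> D x y < e"
proof (rule ccontr)
  assume "\<not> ?thesis"
  then have "\<forall>n::nat. \<exists>x\<in>X. \<exists>y\<in>X. rho x y < 1/(Suc n) \<and> \<not> D x y < e"
    by (metis of_nat_0_less_iff zero_less_Suc divide_pos_pos zero_less_one)
  then have "\<forall>n::nat. \<exists>t. \<exists>x\<in>X. \<exists>y\<in>X. t \<in> chS X D x y \<and> t < 1/(Suc n) \<and> e \<le> D x y"
    by (metis rho_lt not_less)
  then obtain t where t: "\<And>n. \<exists>x\<in>X. \<exists>y\<in>X. t n \<in> chS X D x y \<and> t n < 1/(Suc n) \<and> e \<le> D x y"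
    by metis
  have tpos: "0 < t n" for n
    using t[of n] chS_pos assms by (metis Dz less_le_trans order.refl less_irrefl)
  have tb: "\<And>n. f e \<le> f (t n) + \<alpha>"
  proof -
    fix n
    obtain x y where xy: "x \<in> X" "y \<in> X" "t n \<in> chS X D x y" "e \<le> D x y" using t[of n] by blast
    then obtain N u where N: "2 \<le> (N::nat)" "\<forall>i\<in>{1..N}. u i \<in> X" "u 1 = x" "u N = y"
      and a: "t n = (\<Sum>i=1..N-1. D (u i) (u (i+1)))" unfolding chS_def by blast
    have "f (D x y) \<le> f (t n) + \<alpha>" unfolding a using D3[OF xy(1,2) N] xy assms by simp
    moreover have "f e \<le> f (D x y)" using Fc xy assms unfolding F_class_def by blast
    ultimately show "f e \<le> f (t n) + \<alpha>" by simp
  qed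
  have "t \<longlonglongrightarrow> 0"
  proof (rule tendsto_sandwich[of "\<lambda>_. 0" _ _ "\<lambda>n. 1 / (Suc n)"])
    show "\<forall>\<^sub>F n in sequentially. 0 \<le> t n" using tpos by (simp add: less_imp_le)
    show "\<forall>\<^sub>F n in sequentially. t n \<le> 1 / (Suc n)" using t by (meson always_eventually less_imp_le)
    show "(\<lambda>n. 1 / real (Suc n)) \<longlonglongrightarrow> 0" using LIMSEQ_inverse_real_of_nat by (simp add: inverse_eq_divide)
  qed simp
  then have "filterlim (\<lambda>n. f (t n)) at_bot sequentially"
    using Fc tpos unfolding F_class_def by blast
  then have "\<forall>\<^sub>F n in sequentially. f (t n) < f e - \<alpha>"
    by (simp add: filterlim_at_bot_dense)
  then obtain n0 where "\<forall>n\<ge>n0. f (t n) < f e - \<alpha>" unfolding eventually_sequentially by blast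
  then have "f (t n0) < f e - \<alpha>" by simp
  then show False using tb[of n0] by simp
qed

lemma rho_metric: "Metric_space X rho"
proof
  fix x y z
  show "0 \<le> rho x y" by (rule rho_nn)
  show "rho x y = rho y x" by (rule rho_sym)
  show "x \<in> X \<Longrightarrow> y \<in> X \<Longrightarrow> rho x y = 0 \<longleftrightarrow> x = y"
  proof
    assume xy: "x \<in> X" "y \<in> X" "rho x y = 0"
    have lt: "D x y < e" if "e > 0" for e using key[OF that] xy by auto
    have "D x y \<le> 0"
    proof (rule ccontr)
      assume "\<not> D x y \<le> 0"
      then have "D x y < D x y" using lt[of "D x y"] by simp
      then show False by simp
    qed
    then show "x = y" using Dnn Dz xy by (meson antisym)
  next
    assume xy: "x \<in> X" "y \<in> X" "x = y"
    then show "rho x y = 0" using rho_D[of x y] rho_nn[of x y] Dz by force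
  qed
  show "x \<in> X \<Longrightarrow> y \<in> X \<Longrightarrow> z \<in> X \<Longrightarrow> rho x z \<le> rho x y + rho y z" by (rule rho_tri)
qed

lemma topo_eq: "F_topology X D = Metric_space.mtopology X rho"
proof -
  have "(\<lambda>C. C \<subseteq> X \<and> (\<forall>x\<in>C. \<exists>r>0. {y\<in>X. D y x < r} \<subseteq> C)) = Metric_space.mopen X rho"
  proof (rule ext)
    fix C
    show "(C \<subseteq> X \<and> (\<forall>x\<in>C. \<exists>r>0. {y\<in>X. D y x < r} \<subseteq> C)) = Metric_space.mopen X rho C"
      unfolding Metric_space.mopen_def[OF rho_metric] Metric_space.mball_def[OF rho_metric]
    proof (intro iffI conjI; elim conjE)
      assume C: "C \<subseteq> X" "\<forall>x\<in>C. \<exists>r>0. {y\<in>X. D y x < r} \<subseteq> C"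
      show "C \<subseteq> X" by (fact C(1))
      show "\<forall>x. x \<in> C \<longrightarrow> (\<exists>r>0. {y. x \<in> X \<and> y \<in> X \<and> rho x y < r} \<subseteq> C)"
      proof (intro allI impI)
        fix x assume x: "x \<in> C"
        obtain r where r: "r > 0" "{y\<in>X. D y x < r} \<subseteq> C" using C x by blast
        obtain d where d: "d > 0" "\<forall>x\<in>X. \<forall>y\<in>X. rho x y < d \<longrightarrow> D x y < r" using key r by blast
        have "{y. x \<in> X \<and> y \<in> X \<and> rho x y < d} \<subseteq> C"
        proof
          fix y assume y: "y \<in> {y. x \<in> X \<and> y \<in> X \<and> rho x y < d}"
          then have "D x y < r" using d by blast
          then have "D y x < r" using Dsym y by auto
          then show "y \<in> C" using r(2) y by blast
        qed
        then show "\<exists>r>0. {y. x \<in> X \<and> y \<in> X \<and> rho x y < r} \<subseteq> C" using d by blast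
      qed
    next
      assume C: "C \<subseteq> X" "\<forall>x. x \<in> C \<longrightarrow> (\<exists>r>0. {y. x \<in> X \<and> y \<in> X \<and> rho x y < r} \<subseteq> C)"
      show "C \<subseteq> X" by (fact C(1))
      show "\<forall>x\<in>C. \<exists>r>0. {y\<in>X. D y x < r} \<subseteq> C"
      proof
        fix x assume x: "x \<in> C"
        obtain r where r: "r > 0" "{y. x \<in> X \<and> y \<in> X \<and> rho x y < r} \<subseteq> C" using C x by blast
        have "{y\<in>X. D y x < r} \<subseteq> C"
        proof
          fix y assume y: "y \<in> {y\<in>X. D y x < r}"
          have "rho x y < r" using rho_D[of x y] Dsym[of x y] x C y by auto
          then show "y \<in> C" using r x C y by auto
        qed
        then show "\<exists>r>0. {y\<in>X. D y x < r} \<subseteq> C" using r by blast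
      qed
    qed
  qed
  then show ?thesis
    unfolding F_topology_def Metric_space.mtopology_def[OF rho_metric] by simp
qed

end

theorem mainTheorem2:
  fixes X :: "'a set" and D :: "'a \<Rightarrow> 'a \<Rightarrow> real" and f :: "real \<Rightarrow> real" and \<alpha> :: real
  assumes "X \<noteq> {}"
    and "F_metric_wrt X D f \<alpha>"
  shows "metrizable_space (F_topology X D)"
  unfolding metrizable_space_def
  using rho_metric[OF assms(2)] topo_eq[OF assms(2)] by blast

end
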